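(* Let $A\subset\mathbb S$, $\epsilon>0$, $a\in A$, and let $x\in\mathbb{R}^n$ be $\epsilon$-trapped by $a$. Then the orbit $\{T^ix\}$ does not converge to $A$.
   Context: Work in $X=\mathbb{R}^n$ with Euclidean distance $d$ and norm $\|\cdot\|$, unit sphere $\mathbb S$. An inversion is a map $\iota=B\circ\iota_0$ where $\iota_0(x)=x/\|x\|^2$ and $B$ is an isometry fixing $0$. Let $\mathcal Z$ be a discrete group of isometries of $X$ and fix a sequence $\gamma_1,\gamma_2,\dots$ in $\mathcal Z$; set $T^0=\mathrm{id}$ and $T^ix=\gamma_i^{-1}\iota\gamma_{i-1}^{-1}\iota\cdots\gamma_1^{-1}\iota x$. For $A\subset\mathbb S$ and $r>0$, $N_r(A)$ is the open $r$-neighborhood of $A$. For $x$ with $\|T^ix\|<1$ for all $i\ge0$: $x$ $\epsilon$-orbits $A$ if $T^ix\in N_\epsilon(A)$ for all $i\ge0$; $x$ eventually $\epsilon$-orbits $A$ if this holds for all sufficiently large $i$; $x$ (equivalently its orbit) converges to $A$ if it eventually $\epsilon$-orbits $A$ for every $\epsilon>0$. For $a\in A$, the Voronoi cell is $V(a,A)=\{x:d(x,a)\le d(x,b)\text{ for all }b\in A\setminus\{a\}\}$ and $V_r(a,A)=N_r(a)\cap V(a,A)$. A point $a\in A$ is an $\epsilon$-trap (relative to $A$) if (i) $T^ia\in A$ for all $i>0$, and (ii) every $x$ that $\epsilon$-orbits $A$ and lies in $V_\epsilon(a,A)$ satisfies $T^ix\in V_\epsilon(T^ia,A)$ for all $i\ge0$.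 A point $x$ is $\epsilon$-trapped by $a$ if $a$ is an $\epsilon$-trap, $x$ $\epsilon$-orbits $A$, and $x\in V_\epsilon(a,A)$. *)

theory Defs
  imports "HOL-Analysis.Analysis"
begin

definition is_isometry :: "('a::euclidean_space \<Rightarrow> 'a) \<Rightarrow> bool" where
  "is_isometry g \<longleftrightarrow> (\<forall>x y. dist (g x) (g y) = dist x y)"

text \<open>A discrete group of isometries: a group (under composition) of bijective
  isometries in which the identity is isolated (topology of uniform convergence on
  compacts; for affine maps it suffices to test on the closed unit ball).\<close>
definition discrete_isometry_group :: "('a::euclidean_space \<Rightarrow> 'a) set \<Rightarrow> bool" where
  "discrete_isometry_group Z \<longleftrightarrow>
     (\<forall>g\<in>Z. bij g \<and> is_isometry g) \<and> id \<in> Z \<and>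
     (\<forall>g\<in>Z. \<forall>h\<in>Z. g \<circ> h \<in> Z) \<and> (\<forall>g\<in>Z. inv g \<in> Z) \<and>
     (\<exists>\<delta>>0. \<forall>g\<in>Z. (\<forall>x\<in>cball 0 1. dist (g x) x < \<delta>) \<longrightarrow> g = id)"

text \<open>Standard inversion in the unit sphere (convention: 0 is sent to 0).\<close>
definition iota0 :: "'a::euclidean_space \<Rightarrow> 'a" where
  "iota0 x = (1 / (norm x)\<^sup>2) *\<^sub>R x"

fun Tmap :: "(nat \<Rightarrow> 'a::euclidean_space \<Rightarrow> 'a) \<Rightarrow> ('a \<Rightarrow> 'a) \<Rightarrow> nat \<Rightarrow> 'a \<Rightarrow> 'a" where
  "Tmap \<gamma> \<iota> 0 x = x"
| "Tmap \<gamma> \<iota> (Suc i) x = inv (\<gamma> (Suc i)) (\<iota> (Tmap \<gamma> \<iota> i x))"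

definition nbhd :: "real \<Rightarrow> 'a::euclidean_space set \<Rightarrow> 'a set" where
  "nbhd r A = {x. \<exists>b\<in>A. dist x b < r}"

definition voronoi :: "'a::euclidean_space \<Rightarrow> 'a set \<Rightarrow> 'a set" where
  "voronoi a A = {x. \<forall>b\<in>A - {a}. dist x a \<le> dist x b}"

definition voronoi_r :: "real \<Rightarrow> 'a::euclidean_space \<Rightarrow> 'a set \<Rightarrow> 'a set" where
  "voronoi_r r a A = ball a r \<inter> voronoi a A"

definition orbit_inside :: "(nat \<Rightarrow> 'a::euclidean_space \<Rightarrow> 'a) \<Rightarrow> ('a \<Rightarrow> 'a) \<Rightarrow> 'a \<Rightarrow> bool" where
  "orbit_inside \<gamma> \<iota> x \<longleftrightarrow> (\<forall>i. norm (Tmap \<gamma> \<iota> i x) < 1)"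

definition eps_orbits where
  "eps_orbits \<gamma> \<iota> \<epsilon> A x \<longleftrightarrow> orbit_inside \<gamma> \<iota> x \<and> (\<forall>i. Tmap \<gamma> \<iota> i x \<in> nbhd \<epsilon> A)"

definition eventually_eps_orbits where
  "eventually_eps_orbits \<gamma> \<iota> \<epsilon> A x \<longleftrightarrow> orbit_inside \<gamma> \<iota> x \<and>
     (\<exists>N. \<forall>i\<ge>N. Tmap \<gamma> \<iota> i x \<in> nbhd \<epsilon> A)"

definition converges_to where
  "converges_to \<gamma> \<iota> A x \<longleftrightarrow> orbit_inside \<gamma> \<iota> x \<and>
     (\<forall>\<epsilon>>0. eventually_eps_orbits \<gamma> \<iota> \<epsilon> A x)"

definition eps_trap where
  "eps_trap \<gamma> \<iota> \<epsilon> A a \<longleftrightarrow> a \<in> A \<and> (\<forall>i>0. Tmap \<gamma> \<iota> i a \<in> A) \<and>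
     (\<forall>x. eps_orbits \<gamma> \<iota> \<epsilon> A x \<and> x \<in> voronoi_r \<epsilon> a A \<longrightarrow>
        (\<forall>i. Tmap \<gamma> \<iota> i x \<in> voronoi_r \<epsilon> (Tmap \<gamma> \<iota> i a) A))"

definition eps_trapped_by where
  "eps_trapped_by \<gamma> \<iota> \<epsilon> A a x \<longleftrightarrow> eps_trap \<gamma> \<iota> \<epsilon> A a \<and> eps_orbits \<gamma> \<iota> \<epsilon> A x \<and>
     x \<in> voronoi_r \<epsilon> a A"

end

theory Submission
  imports Defs
begin

lemma norm_scale_sub_sq:
  fixes y a :: "'a::euclidean_space"
  assumes yy: "y \<bullet> y = r^2" and aa: "a \<bullet> a = 1"
  shows "(norm (c *\<^sub>R y - a))^2 = c^2 * r^2 - 2 * c * (y \<bullet> a) + 1"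
proof -
  have "(norm (c *\<^sub>R y - a))^2 = (c *\<^sub>R y - a) \<bullet> (c *\<^sub>R y - a)" by (rule power2_norm_eq_inner)
  also have "\<dots> = c * c * (y \<bullet> y) - 2 * c * (y \<bullet> a) + a \<bullet> a"
    by (simp add: inner_diff_left inner_diff_right inner_commute algebra_simps)
  finally show ?thesis using yy aa by (simp add: power2_eq_square)
qed

lemma iota0_expand:
  fixes y a :: "'a::euclidean_space"
  assumes "norm a = 1" "norm y \<le> 1"
  shows "dist y a \<le> dist (iota0 y) (iota0 a)"
proof (cases "y = 0")
  case True
  then show ?thesis using assms by (simp add: iota0_def)
next
  case False
  have ia: "iota0 a = a" using assms by (simp add: iota0_def)
  define r where "r = norm y"
  have r0: "r > 0" using False r_def by simp
  have r1: "r \<le> 1" using assms r_def by simp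
  have yy: "y \<bullet> y = r^2" using r_def by (simp add: power2_norm_eq_inner)
  have aa: "a \<bullet> a = 1"
  proof -
    have "a \<bullet> a = (norm a)^2" by (simp add: power2_norm_eq_inner)
    thus ?thesis using assms(1) by simp
  qed
  have e1: "(dist y a)^2 = r^2 - 2 * (y \<bullet> a) + 1"
    using norm_scale_sub_sq[OF yy aa, of 1] by (simp add: dist_norm)
  define c where "c = 1 / r^2"
  have r2: "r^2 > 0" using r0 by simp
  have cr: "c * r^2 = 1" using r2 by (simp add: c_def)
  have ic: "iota0 y = c *\<^sub>R y" by (simp add: iota0_def c_def r_def)
  have e2: "(dist (iota0 y) a)^2 = c^2 * r^2 - 2 * c * (y \<bullet> a) + 1"
    unfolding ic dist_norm by (rule norm_scale_sub_sq[OF yy aa])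
  have "c^2 * r^2 = c * (c * r^2)" by (simp add: power2_eq_square)
  also have "\<dots> = c" using cr by simp
  finally have c2: "c^2 * r^2 = c" .
  have e3: "(dist (iota0 y) a)^2 = c - 2 * c * (y \<bullet> a) + 1" using e2 c2 by simp
  have c1: "c \<ge> 1"
  proof -
    have "r^2 \<le> 1" using r0 r1 by (simp add: power_le_one)
    thus ?thesis using r2 by (simp add: c_def)
  qed
  have "c - 2 * c * (y \<bullet> a) + 1 = c * (r^2 - 2 * (y \<bullet> a) + 1)"
    using cr by (simp add: algebra_simps)
  hence e4: "(dist (iota0 y) a)^2 = c * (dist y a)^2" using e3 e1 by simp
  have "(dist y a)^2 \<le> c * (dist y a)^2"
    using mult_right_mono[OF c1, of "(dist y a)^2"] by simp
  hence "(dist y a)^2 \<le> (dist (iota0 y) a)^2" using e4 by simp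
  hence "dist y a \<le> dist (iota0 y) a" by (rule power2_le_imp_le) simp
  thus ?thesis using ia by simp
qed

lemma inv_bij_isometry:
  assumes "bij g" "is_isometry g"
  shows "dist (inv g u) (inv g v) = dist u v"
proof -
  have "dist u v = dist (g (inv g u)) (g (inv g v))"
    using assms(1) by (simp add: bij_is_surj surj_f_inv_f)
  also have "\<dots> = dist (inv g u) (inv g v)" using assms(2) by (simp add: is_isometry_def)
  finally show ?thesis by simp
qed

theorem lemma3p4:
  fixes Z :: "('a::euclidean_space \<Rightarrow> 'a) set"
    and \<gamma> :: "nat \<Rightarrow> 'a \<Rightarrow> 'a"
    and B :: "'a \<Rightarrow> 'a"
    and A :: "'a set" and \<epsilon> :: real and a x :: 'a
  assumes "discrete_isometry_group Z"
    and "\<forall>i\<ge>1. \<gamma> i \<in> Z"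
    and "is_isometry B" and "B 0 = 0"
    and "A \<subseteq> sphere 0 1"
    and "\<epsilon> > 0" and "a \<in> A"
    and "eps_trapped_by \<gamma> (B \<circ> iota0) \<epsilon> A a x"
  shows "\<not> converges_to \<gamma> (B \<circ> iota0) A x"
proof
  assume conv: "converges_to \<gamma> (B \<circ> iota0) A x"
  let ?T = "Tmap \<gamma> (B \<circ> iota0)"
  have trap: "eps_trap \<gamma> (B \<circ> iota0) \<epsilon> A a" and eo: "eps_orbits \<gamma> (B \<circ> iota0) \<epsilon> A x"
    and xv: "x \<in> voronoi_r \<epsilon> a A"
    using assms(8) by (auto simp: eps_trapped_by_def)
  have inside: "\<And>i. norm (?T i x) < 1" using eo by (simp add: eps_orbits_def orbit_inside_def)
  have aA: "\<And>i. ?T i a \<in> A"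
  proof -
    fix i show "?T i a \<in> A"
      using trap assms(7) by (cases "i = 0") (auto simp: eps_trap_def)
  qed
  have an: "norm (?T i a) = 1" for i
  proof -
    have "?T i a \<in> sphere 0 1" using aA[of i] assms(5) by blast
    thus ?thesis by simp
  qed
  have vor: "\<And>i. ?T i x \<in> voronoi_r \<epsilon> (?T i a) A"
    using trap eo xv by (auto simp: eps_trap_def)
  have step: "dist (?T i x) (?T i a) \<le> dist (?T (Suc i) x) (?T (Suc i) a)" for i
  proof -
    have g: "\<gamma> (Suc i) \<in> Z" using assms(2) by simp
    hence gb: "bij (\<gamma> (Suc i))" "is_isometry (\<gamma> (Suc i))"
      using assms(1) by (auto simp: discrete_isometry_group_def)
    have "dist (?T i x) (?T i a) \<le> dist (iota0 (?T i x)) (iota0 (?T i a))"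
      using iota0_expand[OF an[of i]] inside[of i] by simp
    also have "\<dots> = dist (B (iota0 (?T i x))) (B (iota0 (?T i a)))"
      using assms(3) by (simp add: is_isometry_def)
    also have "\<dots> = dist (?T (Suc i) x) (?T (Suc i) a)"
      using inv_bij_isometry[OF gb] by simp
    finally show ?thesis .
  qed
  have mono: "dist x a \<le> dist (?T i x) (?T i a)" for i
  proof (induction i)
    case 0 then show ?case by simp
  next
    case (Suc i) then show ?case using step[of i] by linarith
  qed
  have d0: "dist x a > 0"
  proof -
    have "norm x < 1" using inside[of 0] by simp
    hence "x \<noteq> a" using an[of 0] by auto
    thus ?thesis by simp
  qed
  obtain N where N: "\<forall>i\<ge>N. ?T i x \<in> nbhd (dist x a) A"
  proof -
    have "eventually_eps_orbits \<gamma> (B \<circ> iota0) (dist x a) A x"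
      using conv d0 by (simp add: converges_to_def)
    thus ?thesis using that by (auto simp: eventually_eps_orbits_def)
  qed
  then obtain b where b: "b \<in> A" "dist (?T N x) b < dist x a"
    by (auto simp: nbhd_def)
  have "dist (?T N x) (?T N a) \<le> dist (?T N x) b"
    using vor[of N] b(1) by (cases "b = ?T N a") (auto simp: voronoi_r_def voronoi_def)
  thus False using b(2) mono[of N] by linarith
qed

end
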